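(* Let $(M,J,\nabla,\xi)$ be a conical special complex manifold and $A:=\nabla J$. Then $L_{J\xi}\nabla=A$, $L_{J\xi}A=-2JA$ and $L_{J\xi}(JA)=2A$.
   Context: A conical special complex manifold $(M,J,\nabla,\xi)$: complex manifold $(M,J)$ with a torsion-free flat connection $\nabla$ such that $A=\nabla J$ is symmetric ($A_XY=(\nabla_XJ)Y=A_YX$), and a nowhere-vanishing vector field $\xi$ with $\nabla\xi=\mathrm{Id}$ and $L_\xi J=0$. $(JA)_XY=J(A_XY)$; $L_{J\xi}\nabla$ is the Lie derivative of the connection, $(L_V\nabla)_XY=[V,\nabla_XY]-\nabla_{[V,X]}Y-\nabla_X[V,Y]$. *)

theory Defs
  imports "HOL-Analysis.Analysis"
begin

text \<open>Local model: the manifold M is represented by an open chart domain U in a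
finite-dimensional real vector space 'a. Vector fields are maps 'a \<Rightarrow> 'a
(only their values on U matter); (1,1)-tensor fields are maps p \<mapsto> (linear map);
an arbitrary affine connection is given by its Christoffel symbols
Gam p v w (bilinear in v, w):  nabla_X Y = dY(X) + Gam(X,Y).\<close>

fun diff_iter :: "'a::real_normed_vector list \<Rightarrow> ('a \<Rightarrow> 'b::real_normed_vector) \<Rightarrow> 'a \<Rightarrow> 'b" where
  "diff_iter [] f = f"
| "diff_iter (v # vs) f = (\<lambda>x. frechet_derivative (diff_iter vs f) (at x) v)"

definition smooth_on :: "'a::real_normed_vector set \<Rightarrow> ('a \<Rightarrow> 'b::real_normed_vector) \<Rightarrow> bool" where
  "smooth_on U f \<longleftrightarrow> (\<forall>vs. \<forall>x\<in>U. diff_iter vs f differentiable (at x))"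

definition smooth_endo_field :: "'a::euclidean_space set \<Rightarrow> ('a \<Rightarrow> 'a \<Rightarrow> 'a) \<Rightarrow> bool" where
  "smooth_endo_field U T \<longleftrightarrow> (\<forall>p\<in>U. linear (T p)) \<and> (\<forall>w. smooth_on U (\<lambda>p. T p w))"

definition smooth_christoffel :: "'a::euclidean_space set \<Rightarrow> ('a \<Rightarrow> 'a \<Rightarrow> 'a \<Rightarrow> 'a) \<Rightarrow> bool" where
  "smooth_christoffel U Gam \<longleftrightarrow> (\<forall>p\<in>U. bilinear (Gam p)) \<and> (\<forall>v w. smooth_on U (\<lambda>p. Gam p v w))"

definition ddir :: "('a::real_normed_vector \<Rightarrow> 'b::real_normed_vector) \<Rightarrow> 'a \<Rightarrow> 'a \<Rightarrow> 'b" where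
  "ddir f p v = frechet_derivative f (at p) v"

definition lie_bracket :: "('a::real_normed_vector \<Rightarrow> 'a) \<Rightarrow> ('a \<Rightarrow> 'a) \<Rightarrow> 'a \<Rightarrow> 'a" where
  "lie_bracket X Y = (\<lambda>p. ddir Y p (X p) - ddir X p (Y p))"

definition cov :: "('a::real_normed_vector \<Rightarrow> 'a \<Rightarrow> 'a \<Rightarrow> 'a) \<Rightarrow> ('a \<Rightarrow> 'a) \<Rightarrow> ('a \<Rightarrow> 'a) \<Rightarrow> 'a \<Rightarrow> 'a" where
  "cov Gam X Y = (\<lambda>p. ddir Y p (X p) + Gam p (X p) (Y p))"

definition app_endo :: "('a \<Rightarrow> 'a \<Rightarrow> 'a) \<Rightarrow> ('a \<Rightarrow> 'a) \<Rightarrow> 'a \<Rightarrow> 'a" where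
  "app_endo T Y = (\<lambda>p. T p (Y p))"

definition nablaJ :: "('a::real_normed_vector \<Rightarrow> 'a \<Rightarrow> 'a \<Rightarrow> 'a) \<Rightarrow> ('a \<Rightarrow> 'a \<Rightarrow> 'a) \<Rightarrow> ('a \<Rightarrow> 'a) \<Rightarrow> ('a \<Rightarrow> 'a) \<Rightarrow> 'a \<Rightarrow> 'a" where
  "nablaJ Gam J X Y = (\<lambda>p. cov Gam X (app_endo J Y) p - J p (cov Gam X Y p))"

definition torsion :: "('a::real_normed_vector \<Rightarrow> 'a \<Rightarrow> 'a \<Rightarrow> 'a) \<Rightarrow> ('a \<Rightarrow> 'a) \<Rightarrow> ('a \<Rightarrow> 'a) \<Rightarrow> 'a \<Rightarrow> 'a" where
  "torsion Gam X Y = (\<lambda>p. cov Gam X Y p - cov Gam Y X p - lie_bracket X Y p)"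

definition curvature :: "('a::real_normed_vector \<Rightarrow> 'a \<Rightarrow> 'a \<Rightarrow> 'a) \<Rightarrow> ('a \<Rightarrow> 'a) \<Rightarrow> ('a \<Rightarrow> 'a) \<Rightarrow> ('a \<Rightarrow> 'a) \<Rightarrow> 'a \<Rightarrow> 'a" where
  "curvature Gam X Y Z = (\<lambda>p. cov Gam X (cov Gam Y Z) p - cov Gam Y (cov Gam X Z) p
                              - cov Gam (lie_bracket X Y) Z p)"

definition nijenhuis :: "('a::real_normed_vector \<Rightarrow> 'a \<Rightarrow> 'a) \<Rightarrow> ('a \<Rightarrow> 'a) \<Rightarrow> ('a \<Rightarrow> 'a) \<Rightarrow> 'a \<Rightarrow> 'a" where
  "nijenhuis J X Y = (\<lambda>p. lie_bracket (app_endo J X) (app_endo J Y) p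
        - J p (lie_bracket (app_endo J X) Y p) - J p (lie_bracket X (app_endo J Y) p)
        - lie_bracket X Y p)"

definition lie_endo :: "('a::real_normed_vector \<Rightarrow> 'a) \<Rightarrow> ('a \<Rightarrow> 'a \<Rightarrow> 'a) \<Rightarrow> ('a \<Rightarrow> 'a) \<Rightarrow> 'a \<Rightarrow> 'a" where
  "lie_endo V T Y = (\<lambda>p. lie_bracket V (app_endo T Y) p - T p (lie_bracket V Y p))"

definition lie_conn :: "('a::real_normed_vector \<Rightarrow> 'a \<Rightarrow> 'a \<Rightarrow> 'a) \<Rightarrow> ('a \<Rightarrow> 'a) \<Rightarrow> ('a \<Rightarrow> 'a) \<Rightarrow> ('a \<Rightarrow> 'a) \<Rightarrow> 'a \<Rightarrow> 'a" where
  "lie_conn Gam V X Y = (\<lambda>p. lie_bracket V (cov Gam X Y) p - cov Gam (lie_bracket V X) Y p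
                              - cov Gam X (lie_bracket V Y) p)"

definition lie_12 :: "('a::real_normed_vector \<Rightarrow> 'a) \<Rightarrow> (('a \<Rightarrow> 'a) \<Rightarrow> ('a \<Rightarrow> 'a) \<Rightarrow> 'a \<Rightarrow> 'a) \<Rightarrow> ('a \<Rightarrow> 'a) \<Rightarrow> ('a \<Rightarrow> 'a) \<Rightarrow> 'a \<Rightarrow> 'a" where
  "lie_12 V B X Y = (\<lambda>p. lie_bracket V (B X Y) p - B (lie_bracket V X) Y p - B X (lie_bracket V Y) p)"

definition conical_special_complex ::
  "'a::euclidean_space set \<Rightarrow> ('a \<Rightarrow> 'a \<Rightarrow> 'a) \<Rightarrow> ('a \<Rightarrow> 'a \<Rightarrow> 'a \<Rightarrow> 'a) \<Rightarrow> ('a \<Rightarrow> 'a) \<Rightarrow> bool" where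
  "conical_special_complex U J Gam xi \<longleftrightarrow>
     open U \<and>
     \<comment> \<open>(U, J) complex: smooth almost complex structure with vanishing Nijenhuis tensor\<close>
     smooth_endo_field U J \<and> (\<forall>p\<in>U. \<forall>v. J p (J p v) = - v) \<and>
     (\<forall>X Y. smooth_on U X \<longrightarrow> smooth_on U Y \<longrightarrow> (\<forall>p\<in>U. nijenhuis J X Y p = 0)) \<and>
     \<comment> \<open>nabla: smooth connection, torsion-free and flat\<close>
     smooth_christoffel U Gam \<and>
     (\<forall>X Y. smooth_on U X \<longrightarrow> smooth_on U Y \<longrightarrow> (\<forall>p\<in>U. torsion Gam X Y p = 0)) \<and>
     (\<forall>X Y Z. smooth_on U X \<longrightarrow> smooth_on U Y \<longrightarrow> smooth_on U Z \<longrightarrow>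
        (\<forall>p\<in>U. curvature Gam X Y Z p = 0)) \<and>
     \<comment> \<open>A = nabla J is symmetric\<close>
     (\<forall>X Y. smooth_on U X \<longrightarrow> smooth_on U Y \<longrightarrow> (\<forall>p\<in>U. nablaJ Gam J X Y p = nablaJ Gam J Y X p)) \<and>
     \<comment> \<open>xi: smooth, nowhere vanishing, nabla xi = Id, L_xi J = 0\<close>
     smooth_on U xi \<and> (\<forall>p\<in>U. xi p \<noteq> 0) \<and>
     (\<forall>X. smooth_on U X \<longrightarrow> (\<forall>p\<in>U. cov Gam X xi p = X p)) \<and>
     (\<forall>Y. smooth_on U Y \<longrightarrow> (\<forall>p\<in>U. lie_endo xi J Y p = 0))"

end

theory Submission
  imports Defs
begin


lemma diff_iter_local:
  assumes "open U" "\<forall>y\<in>U. f y = g y"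
  shows "x \<in> U \<Longrightarrow> diff_iter vs f x = diff_iter vs g x"
proof (induction vs arbitrary: x)
  case Nil then show ?case using assms by simp
next
  case (Cons v vs)
  have "frechet_derivative (diff_iter vs f) (at x) = frechet_derivative (diff_iter vs g) (at x)"
    unfolding frechet_derivative_def
    using has_derivative_transform_within_open[OF _ assms(1) Cons.prems, of "diff_iter vs f" _ UNIV "diff_iter vs g"]
      has_derivative_transform_within_open[OF _ assms(1) Cons.prems, of "diff_iter vs g" _ UNIV "diff_iter vs f"]
      Cons.IH by metis
  then show ?case by simp
qed

lemma diff_iter_append: "diff_iter (vs @ [v]) f = diff_iter vs (diff_iter [v] f)"
  by (induction vs) auto

lemma differentiable_local:
  assumes "open U" "x \<in> U" "\<forall>y\<in>U. f y = g y" "f differentiable (at x)"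
  shows "g differentiable (at x)"
  using assms has_derivative_transform_within_open unfolding differentiable_def by metis

lemma smooth_on_iff:
  "smooth_on U f \<longleftrightarrow> (\<forall>x\<in>U. f differentiable (at x)) \<and>
     (\<forall>v. smooth_on U (\<lambda>x. frechet_derivative f (at x) v))"
proof
  assume s: "smooth_on U f"
  show "(\<forall>x\<in>U. f differentiable (at x)) \<and> (\<forall>v. smooth_on U (\<lambda>x. frechet_derivative f (at x) v))"
  proof (intro conjI allI)
    show "\<forall>x\<in>U. f differentiable (at x)" using s unfolding smooth_on_def by (metis diff_iter.simps(1))
    fix v
    show "smooth_on U (\<lambda>x. frechet_derivative f (at x) v)"
      unfolding smooth_on_def
    proof (intro allI ballI)
      fix vs x assume "x \<in> U"
      then have "diff_iter (vs @ [v]) f differentiable (at x)" using s unfolding smooth_on_def by blast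
      then show "diff_iter vs (\<lambda>x. frechet_derivative f (at x) v) differentiable (at x)"
        by (simp add: diff_iter_append)
    qed
  qed
next
  assume r: "(\<forall>x\<in>U. f differentiable (at x)) \<and> (\<forall>v. smooth_on U (\<lambda>x. frechet_derivative f (at x) v))"
  show "smooth_on U f"
    unfolding smooth_on_def
  proof (intro allI ballI)
    fix vs x assume x: "x \<in> U"
    show "diff_iter vs f differentiable (at x)"
    proof (cases vs rule: rev_exhaust)
      case Nil then show ?thesis using r x by simp
    next
      case (snoc ws v)
      then show ?thesis using r x unfolding smooth_on_def by (simp add: diff_iter_append)
    qed
  qed
qed

lemma smooth_coinduct:
  assumes U: "open U" and P: "P f"
    and D: "\<And>f. P f \<Longrightarrow> \<forall>x\<in>U. f differentiable (at x)"
    and S: "\<And>f v. P f \<Longrightarrow> \<exists>g. P g \<and> (\<forall>x\<in>U. g x = frechet_derivative f (at x) v)"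
  shows "smooth_on U f"
proof -
  have "\<forall>f. P f \<longrightarrow> (\<forall>x\<in>U. diff_iter vs f differentiable (at x))" for vs
  proof (induction vs rule: rev_induct)
    case Nil then show ?case using D by simp
  next
    case (snoc v vs)
    show ?case
    proof (intro allI impI ballI)
      fix f x assume Pf: "P f" and x: "x \<in> U"
      obtain g where g: "P g" "\<forall>x\<in>U. g x = frechet_derivative f (at x) v" using S[OF Pf] by blast
      have "diff_iter vs g differentiable (at x)" using snoc g x by blast
      moreover have "\<forall>y\<in>U. diff_iter vs g y = diff_iter vs (diff_iter [v] f) y"
        using diff_iter_local[OF U, of g "diff_iter [v] f"] g by simp
      ultimately show "diff_iter (vs @ [v]) f differentiable (at x)"
        using differentiable_local[OF U x] by (simp add: diff_iter_append)
    qed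
  qed
  then show ?thesis using P unfolding smooth_on_def by blast
qed

lemma smooth_diffble: "smooth_on U f \<Longrightarrow> x \<in> U \<Longrightarrow> f differentiable (at x)"
  using smooth_on_iff by blast

lemma smooth_deriv: "smooth_on U f \<Longrightarrow> smooth_on U (\<lambda>x. frechet_derivative f (at x) v)"
  using smooth_on_iff by blast

lemma smooth_local:
  assumes "open U" "smooth_on U f" "\<forall>y\<in>U. f y = g y"
  shows "smooth_on U g"
  unfolding smooth_on_def
proof (intro allI ballI)
  fix vs x assume x: "x \<in> U"
  have "diff_iter vs f differentiable (at x)" using assms x unfolding smooth_on_def by blast
  moreover have "\<forall>y\<in>U. diff_iter vs f y = diff_iter vs g y" using diff_iter_local[OF assms(1,3)] by blast
  ultimately show "diff_iter vs g differentiable (at x)" using differentiable_local[OF assms(1) x] by blast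
qed

lemma smooth_const: "open U \<Longrightarrow> smooth_on U (\<lambda>x. c)"
  by (rule smooth_coinduct[where P="\<lambda>f. \<exists>c. f = (\<lambda>x. c)"]) auto

lemma smooth_linear:
  assumes U: "open U" and L: "bounded_linear L" and X: "smooth_on U X"
  shows "smooth_on U (\<lambda>x. L (X x))"
proof (rule smooth_coinduct[where P="\<lambda>f. \<exists>X. smooth_on U X \<and> f = (\<lambda>x. L (X x))"])
  show "\<exists>X'. smooth_on U X' \<and> (\<lambda>x. L (X x)) = (\<lambda>x. L (X' x))" using X by blast
  fix f assume "\<exists>X. smooth_on U X \<and> f = (\<lambda>x. L (X x))"
  then obtain X where X: "smooth_on U X" and f: "f = (\<lambda>x. L (X x))" by blast
  have d: "((\<lambda>x. L (X x)) has_derivative (\<lambda>h. L (frechet_derivative X (at x) h))) (at x)" if "x \<in> U" for x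
    using bounded_linear.has_derivative[OF L] smooth_diffble[OF X that] frechet_derivative_works by blast
  show "\<forall>x\<in>U. f differentiable (at x)" using d f unfolding differentiable_def by blast
  fix v
  show "\<exists>g. (\<exists>X. smooth_on U X \<and> g = (\<lambda>x. L (X x))) \<and> (\<forall>x\<in>U. g x = frechet_derivative f (at x) v)"
    apply (rule exI[of _ "\<lambda>x. L (frechet_derivative X (at x) v)"])
    using smooth_deriv[OF X] d f frechet_derivative_at by fastforce
qed (use U in auto)

inductive psum :: "'a::real_normed_vector set \<Rightarrow> ('a \<Rightarrow> 'b::real_normed_vector) \<Rightarrow> bool" for U where
  base: "smooth_on U f \<Longrightarrow> smooth_on U g \<Longrightarrow> psum U (\<lambda>x. f x *\<^sub>R g x)"
| add: "psum U h1 \<Longrightarrow> psum U h2 \<Longrightarrow> psum U (\<lambda>x. h1 x + h2 x)"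

lemma psum_diffble: "psum U h \<Longrightarrow> x \<in> U \<Longrightarrow> h differentiable (at x)"
proof (induction rule: psum.induct)
  case (base f g) then show ?case
    by (intro differentiable_scaleR smooth_diffble[OF _ base.prems])
next
  case (add h1 h2) then show ?case by (simp add: differentiable_add)
qed

lemma psum_deriv: "psum U h \<Longrightarrow> open U \<Longrightarrow> \<exists>g. psum U g \<and> (\<forall>x\<in>U. g x = frechet_derivative h (at x) v)"
proof (induction rule: psum.induct)
  case (base f g)
  let ?g = "\<lambda>x. frechet_derivative f (at x) v *\<^sub>R g x + f x *\<^sub>R frechet_derivative g (at x) v"
  have "psum U ?g" by (rule psum.add[OF psum.base[OF smooth_deriv[OF base(1)] base(2)] psum.base[OF base(1) smooth_deriv[OF base(2)]]])
  moreover have "?g x = frechet_derivative (\<lambda>x. f x *\<^sub>R g x) (at x) v" if "x \<in> U" for x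
  proof -
    have "((\<lambda>x. f x *\<^sub>R g x) has_derivative
       (\<lambda>h. f x *\<^sub>R frechet_derivative g (at x) h + frechet_derivative f (at x) h *\<^sub>R g x)) (at x)"
      using smooth_diffble[OF base(1) that] smooth_diffble[OF base(2) that]
      by (intro has_derivative_scaleR) (simp_all add: frechet_derivative_works[symmetric])
    then have e: "frechet_derivative (\<lambda>x. f x *\<^sub>R g x) (at x) =
       (\<lambda>h. f x *\<^sub>R frechet_derivative g (at x) h + frechet_derivative f (at x) h *\<^sub>R g x)"
      by (rule frechet_derivative_at[symmetric])
    show ?thesis unfolding e by (simp add: add.commute)
  qed
  ultimately show ?case by (intro exI[of _ ?g]) simp
next
  case (add h1 h2)
  obtain g1 g2 where g: "psum U g1" "psum U g2" "\<forall>x\<in>U. g1 x = frechet_derivative h1 (at x) v"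
    "\<forall>x\<in>U. g2 x = frechet_derivative h2 (at x) v" using add by blast
  have "g1 x + g2 x = frechet_derivative (\<lambda>x. h1 x + h2 x) (at x) v" if "x \<in> U" for x
  proof -
    have "((\<lambda>x. h1 x + h2 x) has_derivative
       (\<lambda>h. frechet_derivative h1 (at x) h + frechet_derivative h2 (at x) h)) (at x)"
      using psum_diffble[OF add(1) that] psum_diffble[OF add(2) that]
      by (intro has_derivative_add) (simp_all add: frechet_derivative_works[symmetric])
    then have e: "frechet_derivative (\<lambda>x. h1 x + h2 x) (at x) =
       (\<lambda>h. frechet_derivative h1 (at x) h + frechet_derivative h2 (at x) h)"
      by (rule frechet_derivative_at[symmetric])
    show ?thesis unfolding e using g that by simp
  qed
  then show ?case using psum.add[OF g(1,2)] by (intro exI[of _ "\<lambda>x. g1 x + g2 x"]) simp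
qed

lemma psum_smooth: assumes U: "open U" and h: "psum U h" shows "smooth_on U h"
proof (rule smooth_coinduct[where P="\<lambda>h. \<exists>h'. psum U h' \<and> (\<forall>x\<in>U. h x = h' x)"])
  show "\<exists>h'. psum U h' \<and> (\<forall>x\<in>U. h x = h' x)" using h by blast
  fix f assume "\<exists>h'. psum U h' \<and> (\<forall>x\<in>U. f x = h' x)"
  then obtain h' where h': "psum U h'" "\<forall>x\<in>U. f x = h' x" by blast
  show "\<forall>x\<in>U. f differentiable (at x)"
    using psum_diffble[OF h'(1)] differentiable_local[OF U] h'(2) by metis
  fix v
  obtain g where g: "psum U g" "\<forall>x\<in>U. g x = frechet_derivative h' (at x) v" using psum_deriv[OF h'(1) U] by blast
  have "frechet_derivative h' (at x) = frechet_derivative f (at x)" if "x \<in> U" for x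
    unfolding frechet_derivative_def
    using has_derivative_transform_within_open[OF _ U that, of h' _ UNIV f]
      has_derivative_transform_within_open[OF _ U that, of f _ UNIV h'] h'(2) by metis
  then show "\<exists>g. (\<exists>h'. psum U h' \<and> (\<forall>x\<in>U. g x = h' x)) \<and> (\<forall>x\<in>U. g x = frechet_derivative f (at x) v)"
    using g by metis
qed (use U in auto)

lemma smooth_scaleR: "open U \<Longrightarrow> smooth_on U f \<Longrightarrow> smooth_on U g \<Longrightarrow> smooth_on U (\<lambda>x. f x *\<^sub>R g x)"
  by (rule psum_smooth[OF _ psum.base])

lemma smooth_add: "open U \<Longrightarrow> smooth_on U f \<Longrightarrow> smooth_on U g \<Longrightarrow> smooth_on U (\<lambda>x. f x + g x)"
proof -
  assume a: "open U" "smooth_on U f" "smooth_on U g"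
  have "psum U (\<lambda>x. (\<lambda>_. 1::real) x *\<^sub>R f x + (\<lambda>_. 1::real) x *\<^sub>R g x)"
    by (intro psum.add psum.base) (simp_all add: a smooth_const)
  from psum_smooth[OF a(1) this] show ?thesis by simp
qed

lemma smooth_mult: "open U \<Longrightarrow> smooth_on U f \<Longrightarrow> smooth_on U g \<Longrightarrow> smooth_on U (\<lambda>x. f x * (g x :: real))"
  using smooth_scaleR[of U f g] by simp

lemma smooth_minus: "open U \<Longrightarrow> smooth_on U f \<Longrightarrow> smooth_on U (\<lambda>x. - f x)"
  using smooth_scaleR[of U "\<lambda>_. -1" f] by (simp add: smooth_const)

lemma smooth_diff: "open U \<Longrightarrow> smooth_on U f \<Longrightarrow> smooth_on U g \<Longrightarrow> smooth_on U (\<lambda>x. f x - g x)"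
  using smooth_add[OF _ _ smooth_minus, of U f g] by simp

lemma smooth_sum: assumes "open U" "finite S" "\<And>i. i \<in> S \<Longrightarrow> smooth_on U (f i)" shows "smooth_on U (\<lambda>x. \<Sum>i\<in>S. f i x)"
  using assms(2,3) proof (induction S rule: finite_induct)
  case empty then show ?case by (simp add: smooth_const assms(1))
next
  case (insert i S) then show ?case by (simp add: smooth_add assms(1))
qed

lemma smooth_inner: "open U \<Longrightarrow> smooth_on U X \<Longrightarrow> smooth_on U (\<lambda>x. X x \<bullet> e)"
  using smooth_linear[OF _ bounded_linear_inner_left] by blast



lemma fd_local:
  assumes "open U" "x \<in> U" "\<forall>y\<in>U. f y = g y"
  shows "frechet_derivative f (at x) = frechet_derivative g (at x)"
  unfolding frechet_derivative_def
  using has_derivative_transform_within_open[OF _ assms(1,2), of f _ UNIV g]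
    has_derivative_transform_within_open[OF _ assms(1,2), of g _ UNIV f] assms(3) by metis

lemma fd_diff:
  assumes "f differentiable (at x)" "g differentiable (at x)"
  shows "frechet_derivative (\<lambda>y. f y - g y) (at x) v = frechet_derivative f (at x) v - frechet_derivative g (at x) v"
proof -
  have "((\<lambda>y. f y - g y) has_derivative (\<lambda>h. frechet_derivative f (at x) h - frechet_derivative g (at x) h)) (at x)"
    using assms by (intro has_derivative_diff) (simp_all add: frechet_derivative_works[symmetric])
  then have e: "frechet_derivative (\<lambda>y. f y - g y) (at x) = (\<lambda>h. frechet_derivative f (at x) h - frechet_derivative g (at x) h)"
    by (rule frechet_derivative_at[symmetric])
  show ?thesis unfolding e by simp
qed

lemma fd_neg:
  assumes "f differentiable (at x)"
  shows "frechet_derivative (\<lambda>y. - f y) (at x) v = - frechet_derivative f (at x) v"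
proof -
  have "((\<lambda>y. - f y) has_derivative (\<lambda>h. - frechet_derivative f (at x) h)) (at x)"
    using assms by (intro has_derivative_minus) (simp_all add: frechet_derivative_works[symmetric])
  then have e: "frechet_derivative (\<lambda>y. - f y) (at x) = (\<lambda>h. - frechet_derivative f (at x) h)"
    by (rule frechet_derivative_at[symmetric])
  show ?thesis unfolding e by simp
qed

lemma ddir_expand:
  assumes "f differentiable (at p)"
  shows "ddir f p w = (\<Sum>i\<in>Basis. (w \<bullet> i) *\<^sub>R ddir f p i)"
proof -
  have l: "linear (frechet_derivative f (at p))" using linear_frechet_derivative[OF assms] .
  have "ddir f p w = frechet_derivative f (at p) (\<Sum>i\<in>Basis. (w \<bullet> i) *\<^sub>R i)"
    unfolding ddir_def by (simp add: euclidean_representation)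
  also have "\<dots> = (\<Sum>i\<in>Basis. (w \<bullet> i) *\<^sub>R ddir f p i)"
    unfolding ddir_def by (simp add: linear_sum[OF l] linear_scale[OF l])
  finally show ?thesis .
qed

lemma lin_expand:
  assumes "linear L"
  shows "L w = (\<Sum>i\<in>Basis. (w \<bullet> i) *\<^sub>R L i)"
proof -
  have "L w = L (\<Sum>i\<in>Basis. (w \<bullet> i) *\<^sub>R i)" by (simp add: euclidean_representation)
  also have "\<dots> = (\<Sum>i\<in>Basis. (w \<bullet> i) *\<^sub>R L i)" by (simp add: linear_sum[OF assms] linear_scale[OF assms])
  finally show ?thesis .
qed

lemma smooth_ddir:
  fixes f :: "'a::euclidean_space \<Rightarrow> 'b::real_normed_vector"
  assumes U: "open U" and f: "smooth_on U f" and X: "smooth_on U X"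
  shows "smooth_on U (\<lambda>p. ddir f p (X p))"
proof (rule smooth_local[OF U])
  show "smooth_on U (\<lambda>p. \<Sum>i\<in>Basis. (X p \<bullet> i) *\<^sub>R ddir f p i)"
    unfolding ddir_def
    by (intro smooth_sum[OF U] smooth_scaleR[OF U] smooth_inner[OF U X] smooth_deriv[OF f] finite_Basis)
  show "\<forall>y\<in>U. (\<Sum>i\<in>Basis. (X y \<bullet> i) *\<^sub>R ddir f y i) = ddir f y (X y)"
    using ddir_expand smooth_diffble[OF f] by metis
qed

lemma smooth_app_endo:
  fixes J :: "'a::euclidean_space \<Rightarrow> 'a \<Rightarrow> 'a"
  assumes U: "open U" and J: "smooth_endo_field U J" and Y: "smooth_on U Y"
  shows "smooth_on U (app_endo J Y)"
proof (rule smooth_local[OF U])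
  show "smooth_on U (\<lambda>p. \<Sum>i\<in>Basis. (Y p \<bullet> i) *\<^sub>R J p i)"
    using J unfolding smooth_endo_field_def
    by (intro smooth_sum[OF U] smooth_scaleR[OF U] smooth_inner[OF U Y] finite_Basis) auto
  show "\<forall>y\<in>U. (\<Sum>i\<in>Basis. (Y y \<bullet> i) *\<^sub>R J y i) = app_endo J Y y"
    using J lin_expand unfolding smooth_endo_field_def app_endo_def by metis
qed

lemma smooth_gam:
  fixes Gam :: "'a::euclidean_space \<Rightarrow> 'a \<Rightarrow> 'a \<Rightarrow> 'a"
  assumes U: "open U" and G: "smooth_christoffel U Gam" and X: "smooth_on U X" and Y: "smooth_on U Y"
  shows "smooth_on U (\<lambda>p. Gam p (X p) (Y p))"
proof (rule smooth_local[OF U])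
  show "smooth_on U (\<lambda>p. \<Sum>i\<in>Basis. (X p \<bullet> i) *\<^sub>R (\<Sum>j\<in>Basis. (Y p \<bullet> j) *\<^sub>R Gam p i j))"
    using G unfolding smooth_christoffel_def
    by (intro smooth_sum[OF U] smooth_scaleR[OF U] smooth_inner[OF U Y] smooth_inner[OF U X] finite_Basis) auto
  show "\<forall>p\<in>U. (\<Sum>i\<in>Basis. (X p \<bullet> i) *\<^sub>R (\<Sum>j\<in>Basis. (Y p \<bullet> j) *\<^sub>R Gam p i j)) = Gam p (X p) (Y p)"
  proof
    fix p assume p: "p \<in> U"
    have b: "bilinear (Gam p)" using G p unfolding smooth_christoffel_def by blast
    then have l1: "linear (\<lambda>x. Gam p x y)" and l2: "linear (\<lambda>y. Gam p x y)" for x y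
      unfolding bilinear_def by auto
    have "Gam p (X p) (Y p) = (\<Sum>i\<in>Basis. (X p \<bullet> i) *\<^sub>R Gam p i (Y p))"
      using lin_expand[OF l1] .
    also have "\<dots> = (\<Sum>i\<in>Basis. (X p \<bullet> i) *\<^sub>R (\<Sum>j\<in>Basis. (Y p \<bullet> j) *\<^sub>R Gam p i j))"
      using lin_expand[OF l2] by metis
    finally show "(\<Sum>i\<in>Basis. (X p \<bullet> i) *\<^sub>R (\<Sum>j\<in>Basis. (Y p \<bullet> j) *\<^sub>R Gam p i j)) = Gam p (X p) (Y p)" by simp
  qed
qed

lemma smooth_cov:
  assumes U: "open U" and G: "smooth_christoffel U Gam" and X: "smooth_on U X" and Y: "smooth_on U Y"
  shows "smooth_on U (cov Gam X Y)"
  unfolding cov_def by (intro smooth_add[OF U] smooth_ddir[OF U Y X] smooth_gam[OF U G X Y])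

lemma smooth_lb:
  fixes X :: "'a::euclidean_space \<Rightarrow> 'a"
  assumes U: "open U" and X: "smooth_on U X" and Y: "smooth_on U Y"
  shows "smooth_on U (lie_bracket X Y)"
  unfolding lie_bracket_def by (intro smooth_diff[OF U] smooth_ddir[OF U Y X] smooth_ddir[OF U X Y])

lemma smooth_nablaJ:
  assumes U: "open U" and G: "smooth_christoffel U Gam" and J: "smooth_endo_field U J"
    and X: "smooth_on U X" and Y: "smooth_on U Y"
  shows "smooth_on U (nablaJ Gam J X Y)"
proof -
  have "smooth_on U (\<lambda>p. cov Gam X (app_endo J Y) p - app_endo J (cov Gam X Y) p)"
    by (intro smooth_diff[OF U] smooth_cov[OF U G X] smooth_app_endo[OF U J] smooth_cov[OF U G X Y] Y)
  then show ?thesis unfolding nablaJ_def app_endo_def by simp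
qed



lemma cov_local:
  assumes "open U" "p \<in> U" "\<forall>q\<in>U. Y q = Y' q"
  shows "cov Gam X Y p = cov Gam X Y' p"
  using fd_local[OF assms] assms unfolding cov_def ddir_def by simp

lemma lb_local:
  assumes "open U" "p \<in> U" "\<forall>q\<in>U. W q = W' q"
  shows "lie_bracket V W p = lie_bracket V W' p"
  using fd_local[OF assms] assms unfolding lie_bracket_def ddir_def by simp

lemma cov_diff:
  assumes "bilinear (Gam p)" "Y1 differentiable (at p)" "Y2 differentiable (at p)"
  shows "cov Gam X (\<lambda>q. Y1 q - Y2 q) p = cov Gam X Y1 p - cov Gam X Y2 p"
  unfolding cov_def ddir_def using fd_diff[OF assms(2,3)] bilinear_rsub[OF assms(1)] by simp

lemma cov_neg:
  assumes "bilinear (Gam p)" "Y differentiable (at p)"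
  shows "cov Gam X (\<lambda>q. - Y q) p = - cov Gam X Y p"
  unfolding cov_def ddir_def using fd_neg[OF assms(2)] bilinear_rneg[OF assms(1)] by simp

lemma lb_diff:
  assumes "V differentiable (at p)" "W1 differentiable (at p)" "W2 differentiable (at p)"
  shows "lie_bracket V (\<lambda>q. W1 q - W2 q) p = lie_bracket V W1 p - lie_bracket V W2 p"
  unfolding lie_bracket_def ddir_def using fd_diff[OF assms(2,3)] linear_diff[OF linear_frechet_derivative[OF assms(1)]]
  by simp

locale csc =
  fixes U :: "'a::euclidean_space set" and J :: "'a \<Rightarrow> 'a \<Rightarrow> 'a"
    and Gam :: "'a \<Rightarrow> 'a \<Rightarrow> 'a \<Rightarrow> 'a" and xi :: "'a \<Rightarrow> 'a"
  assumes H: "conical_special_complex U J Gam xi"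
begin

lemma Uo: "open U" using H unfolding conical_special_complex_def by blast
lemma Jsm: "smooth_endo_field U J" using H unfolding conical_special_complex_def by blast
lemma JJ: "p \<in> U \<Longrightarrow> J p (J p v) = - v" using H unfolding conical_special_complex_def by blast
lemma nij: "smooth_on U X \<Longrightarrow> smooth_on U Y \<Longrightarrow> p \<in> U \<Longrightarrow> nijenhuis J X Y p = 0"
  using H unfolding conical_special_complex_def by blast
lemma Gsm: "smooth_christoffel U Gam" using H unfolding conical_special_complex_def by blast
lemma tor: "smooth_on U X \<Longrightarrow> smooth_on U Y \<Longrightarrow> p \<in> U \<Longrightarrow> torsion Gam X Y p = 0"
  using H unfolding conical_special_complex_def by blast
lemma curv: "smooth_on U X \<Longrightarrow> smooth_on U Y \<Longrightarrow> smooth_on U Z \<Longrightarrow> p \<in> U \<Longrightarrow> curvature Gam X Y Z p = 0"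
  using H unfolding conical_special_complex_def by blast
lemma symA: "smooth_on U X \<Longrightarrow> smooth_on U Y \<Longrightarrow> p \<in> U \<Longrightarrow> nablaJ Gam J X Y p = nablaJ Gam J Y X p"
  using H unfolding conical_special_complex_def by blast
lemma xism: "smooth_on U xi" using H unfolding conical_special_complex_def by blast
lemma cxi: "smooth_on U X \<Longrightarrow> p \<in> U \<Longrightarrow> cov Gam X xi p = X p"
  using H unfolding conical_special_complex_def by blast
lemma lxi: "smooth_on U Y \<Longrightarrow> p \<in> U \<Longrightarrow> lie_endo xi J Y p = 0"
  using H unfolding conical_special_complex_def by blast

lemma Jlin: "p \<in> U \<Longrightarrow> linear (J p)" using Jsm unfolding smooth_endo_field_def by blast
lemma bil: "p \<in> U \<Longrightarrow> bilinear (Gam p)" using Gsm unfolding smooth_christoffel_def by blast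

lemma sJ: "smooth_on U Y \<Longrightarrow> smooth_on U (app_endo J Y)" using smooth_app_endo[OF Uo Jsm] .
lemma sC: "smooth_on U X \<Longrightarrow> smooth_on U Y \<Longrightarrow> smooth_on U (cov Gam X Y)" using smooth_cov[OF Uo Gsm] .
lemma sL: "smooth_on U X \<Longrightarrow> smooth_on U Y \<Longrightarrow> smooth_on U (lie_bracket X Y)" using smooth_lb[OF Uo] .
lemma sA: "smooth_on U X \<Longrightarrow> smooth_on U Y \<Longrightarrow> smooth_on U (nablaJ Gam J X Y)" using smooth_nablaJ[OF Uo Gsm Jsm] .
lemma dif: "smooth_on U X \<Longrightarrow> p \<in> U \<Longrightarrow> X differentiable (at p)" using smooth_diffble .

lemma torE: "smooth_on U X \<Longrightarrow> smooth_on U Y \<Longrightarrow> p \<in> U \<Longrightarrow> lie_bracket X Y p = cov Gam X Y p - cov Gam Y X p"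
  using tor[of X Y p] unfolding torsion_def by (simp add: algebra_simps)

lemma cov_V:
  assumes Z: "smooth_on U Z" and q: "q \<in> U"
  shows "cov Gam Z (app_endo J xi) q = J q (Z q)"
proof -
  have JZ: "smooth_on U (app_endo J Z)" using sJ[OF Z] .
  have l: "lie_bracket xi (app_endo J Z) q = J q (lie_bracket xi Z q)"
    using lxi[OF Z q] unfolding lie_endo_def by simp
  have t1: "lie_bracket xi (app_endo J Z) q = cov Gam xi (app_endo J Z) q - J q (Z q)"
    using torE[OF xism JZ q] cxi[OF JZ q] unfolding app_endo_def by simp
  have t2: "J q (lie_bracket xi Z q) = J q (cov Gam xi Z q) - J q (Z q)"
    using torE[OF xism Z q] cxi[OF Z q] linear_diff[OF Jlin[OF q]] by simp
  have a: "nablaJ Gam J xi Z q = 0"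
    using l t1 t2 unfolding nablaJ_def by simp
  have "nablaJ Gam J Z xi q = 0" using symA[OF Z xism q] a by simp
  then show ?thesis unfolding nablaJ_def using cxi[OF Z q] by simp
qed

abbreviation "V \<equiv> app_endo J xi"

lemma sV: "smooth_on U V" using sJ[OF xism] .

lemma LVJ:
  assumes W: "smooth_on U W" and q: "q \<in> U"
  shows "lie_bracket V (app_endo J W) q = J q (lie_bracket V W q)"
proof -
  have n: "lie_bracket V (app_endo J W) q - J q (lie_bracket V W q)
      - J q (lie_bracket xi (app_endo J W) q) - lie_bracket xi W q = 0"
    using nij[OF xism W q] unfolding nijenhuis_def by simp
  have l: "lie_bracket xi (app_endo J W) q = J q (lie_bracket xi W q)"
    using lxi[OF W q] unfolding lie_endo_def by simp
  show ?thesis using n unfolding l JJ[OF q] by simp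
qed

lemma claim1:
  assumes X: "smooth_on U X" and Y: "smooth_on U Y" and p: "p \<in> U"
  shows "lie_conn Gam V X Y p = nablaJ Gam J X Y p"
proof -
  have CXY: "smooth_on U (cov Gam X Y)" using sC[OF X Y] .
  have a: "lie_bracket V (cov Gam X Y) p = cov Gam V (cov Gam X Y) p - cov Gam (cov Gam X Y) V p"
    using torE[OF sV CXY p] .
  have c: "cov Gam X (lie_bracket V Y) p = cov Gam X (cov Gam V Y) p - cov Gam X (cov Gam Y V) p"
  proof -
    have "cov Gam X (lie_bracket V Y) p = cov Gam X (\<lambda>q. cov Gam V Y q - cov Gam Y V q) p"
      using torE[OF sV Y] by (intro cov_local[OF Uo p]) simp
    also have "\<dots> = cov Gam X (cov Gam V Y) p - cov Gam X (cov Gam Y V) p"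
      by (intro cov_diff bil[OF p] dif[OF _ p] sC sV Y)
    finally show ?thesis .
  qed
  have d: "cov Gam V (cov Gam X Y) p - cov Gam X (cov Gam V Y) p - cov Gam (lie_bracket V X) Y p = 0"
    using curv[OF sV X Y p] unfolding curvature_def by simp
  have e: "cov Gam X (cov Gam Y V) p = cov Gam X (app_endo J Y) p"
    using cov_V[OF Y] by (intro cov_local[OF Uo p]) (simp add: app_endo_def)
  have f: "cov Gam (cov Gam X Y) V p = J p (cov Gam X Y p)"
    using cov_V[OF CXY p] .
  show ?thesis unfolding lie_conn_def nablaJ_def using a c d e f by (simp add: algebra_simps)
qed

lemma AJ:
  assumes X: "smooth_on U X" and Y: "smooth_on U Y" and p: "p \<in> U"
  shows "nablaJ Gam J X (app_endo J Y) p = - J p (nablaJ Gam J X Y p)"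
proof -
  have "cov Gam X (app_endo J (app_endo J Y)) p = cov Gam X (\<lambda>q. - Y q) p"
    using JJ by (intro cov_local[OF Uo p]) (simp add: app_endo_def)
  also have "\<dots> = - cov Gam X Y p" by (intro cov_neg bil[OF p] dif[OF Y p])
  finally have 1: "cov Gam X (app_endo J (app_endo J Y)) p = - cov Gam X Y p" .
  show ?thesis unfolding nablaJ_def 1
    using linear_diff[OF Jlin[OF p]] JJ[OF p] by simp
qed

lemma claim2:
  assumes X: "smooth_on U X" and Y: "smooth_on U Y" and p: "p \<in> U"
  shows "lie_12 V (nablaJ Gam J) X Y p = - 2 *\<^sub>R J p (nablaJ Gam J X Y p)"
proof -
  have JY: "smooth_on U (app_endo J Y)" using sJ[OF Y] .
  have LX: "smooth_on U (lie_bracket V X)" using sL[OF sV X] .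
  have LY: "smooth_on U (lie_bracket V Y)" using sL[OF sV Y] .
  have AXY: "nablaJ Gam J X Y = (\<lambda>q. cov Gam X (app_endo J Y) q - app_endo J (cov Gam X Y) q)"
    unfolding nablaJ_def app_endo_def by simp
  have 1: "lie_bracket V (nablaJ Gam J X Y) p
      = lie_bracket V (cov Gam X (app_endo J Y)) p - J p (lie_bracket V (cov Gam X Y) p)"
    unfolding AXY
    by (subst lb_diff) (auto intro!: dif[OF _ p] sV sC sJ X Y simp: LVJ[OF sC[OF X Y] p])
  have 2: "lie_bracket V (cov Gam X (app_endo J Y)) p = nablaJ Gam J X (app_endo J Y) p
      + cov Gam (lie_bracket V X) (app_endo J Y) p + cov Gam X (app_endo J (lie_bracket V Y)) p"
  proof -
    have "cov Gam X (lie_bracket V (app_endo J Y)) p = cov Gam X (app_endo J (lie_bracket V Y)) p"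
      using LVJ[OF Y] by (intro cov_local[OF Uo p]) (simp add: app_endo_def)
    then show ?thesis using claim1[OF X JY p] unfolding lie_conn_def by (simp add: algebra_simps)
  qed
  have 3: "lie_bracket V (cov Gam X Y) p = nablaJ Gam J X Y p
      + cov Gam (lie_bracket V X) Y p + cov Gam X (lie_bracket V Y) p"
    using claim1[OF X Y p] unfolding lie_conn_def by (simp add: algebra_simps)
  have 4: "nablaJ Gam J (lie_bracket V X) Y p = cov Gam (lie_bracket V X) (app_endo J Y) p - J p (cov Gam (lie_bracket V X) Y p)"
    unfolding nablaJ_def by simp
  have 5: "nablaJ Gam J X (lie_bracket V Y) p = cov Gam X (app_endo J (lie_bracket V Y)) p - J p (cov Gam X (lie_bracket V Y) p)"
    unfolding nablaJ_def by simp
  have lin: "J p (a + b + c) = J p a + J p b + J p c" for a b c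
    using linear_add[OF Jlin[OF p]] by simp
  have "lie_12 V (nablaJ Gam J) X Y p = nablaJ Gam J X (app_endo J Y) p - J p (nablaJ Gam J X Y p)"
    unfolding lie_12_def 1 2 3 4 5 lin by (simp add: algebra_simps)
  also have "\<dots> = - 2 *\<^sub>R J p (nablaJ Gam J X Y p)" using AJ[OF X Y p] by (simp add: scaleR_2)
  finally show ?thesis .
qed

lemma claim3:
  assumes X: "smooth_on U X" and Y: "smooth_on U Y" and p: "p \<in> U"
  shows "lie_12 V (\<lambda>X' Y'. app_endo J (nablaJ Gam J X' Y')) X Y p = 2 *\<^sub>R nablaJ Gam J X Y p"
proof -
  have "lie_12 V (\<lambda>X' Y'. app_endo J (nablaJ Gam J X' Y')) X Y p = J p (lie_12 V (nablaJ Gam J) X Y p)"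
    unfolding lie_12_def LVJ[OF sA[OF X Y] p]
    by (simp add: app_endo_def linear_diff[OF Jlin[OF p]])
  also have "\<dots> = 2 *\<^sub>R nablaJ Gam J X Y p"
    unfolding claim2[OF X Y p] linear_scale[OF Jlin[OF p]] JJ[OF p] by simp
  finally show ?thesis .
qed

end

theorem lemma2p4:
  fixes U :: "'a::euclidean_space set"
    and J :: "'a \<Rightarrow> 'a \<Rightarrow> 'a"
    and Gam :: "'a \<Rightarrow> 'a \<Rightarrow> 'a \<Rightarrow> 'a"
    and xi :: "'a \<Rightarrow> 'a"
  assumes "conical_special_complex U J Gam xi"
  shows "\<forall>X Y. smooth_on U X \<longrightarrow> smooth_on U Y \<longrightarrow> (\<forall>p\<in>U.
            lie_conn Gam (app_endo J xi) X Y p = nablaJ Gam J X Y p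
          \<and> lie_12 (app_endo J xi) (nablaJ Gam J) X Y p = - 2 *\<^sub>R J p (nablaJ Gam J X Y p)
          \<and> lie_12 (app_endo J xi) (\<lambda>X' Y'. app_endo J (nablaJ Gam J X' Y')) X Y p
              = 2 *\<^sub>R nablaJ Gam J X Y p)"
proof -
  interpret csc U J Gam xi using assms by unfold_locales
  show ?thesis using claim1 claim2 claim3 by blast
qed

end
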